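(* Let $G=(V,E)$ be a finite, connected, undirected graph with $n\ge 2$ vertices. Then for every $r\ge 1$, the fixation probability satisfies $f_{G,r}\ge \frac{1}{n}$.
   Context: The Moran process on $G$ with mutant fitness $r>0$ is the Markov chain $(X_i)_{i\ge0}$ whose state $X_i\subseteq V$ is the set of vertices occupied by mutants; every other vertex is occupied by a non-mutant of fitness $1$. Write $W(S)=r|S|+|V\setminus S|$ for the total fitness. Given $X_i=S$, one step is: choose a vertex $x$ with probability $r/W(S)$ if $x\in S$ and $1/W(S)$ if $x\notin S$; then choose a neighbour $y$ of $x$ uniformly at random; set $X_{i+1}=S\cup\{y\}$ if $x\in S$ and $X_{i+1}=S\setminus\{y\}$ if $x\notin S$. Fixation means $X_i=V$ for some $i$. For $x\in V$, $f_{G,r}(x)$ is the probability of fixation when $X_0=\{x\}$, and $f_{G,r}=\frac1n\sum_{x\in V}f_{G,r}(x)$ is the fixation probability when the initial single mutant is placed at a uniformly random vertex. *)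

theory Defs
  imports Complex_Main
begin

definition graph :: "'a set \<Rightarrow> ('a \<Rightarrow> 'a \<Rightarrow> bool) \<Rightarrow> bool" where
  "graph V E \<longleftrightarrow> finite V \<and> (\<forall>x y. E x y \<longrightarrow> x \<in> V \<and> y \<in> V)
     \<and> (\<forall>x y. E x y \<longrightarrow> E y x) \<and> (\<forall>x. \<not> E x x)"

definition connected_graph :: "'a set \<Rightarrow> ('a \<Rightarrow> 'a \<Rightarrow> bool) \<Rightarrow> bool" where
  "connected_graph V E \<longleftrightarrow> graph V E \<and>
     (\<forall>x\<in>V. \<forall>y\<in>V. (x, y) \<in> {(u, v). E u v}\<^sup>*)"

definition nbrs :: "'a set \<Rightarrow> ('a \<Rightarrow> 'a \<Rightarrow> bool) \<Rightarrow> 'a \<Rightarrow> 'a set" where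
  "nbrs V E x = {y \<in> V. E x y}"

definition total_fitness :: "'a set \<Rightarrow> real \<Rightarrow> 'a set \<Rightarrow> real" where
  "total_fitness V r S = r * real (card S) + real (card (V - S))"

definition fit :: "real \<Rightarrow> 'a set \<Rightarrow> 'a \<Rightarrow> real" where
  "fit r S x = (if x \<in> S then r else 1)"

text \<open>\<open>reach_V V E r k S\<close> = probability that X_k = V given X_0 = S in the Moran
 process (one step: choose x with prob. fit/W, then a uniform neighbour y).\<close>
fun reach_V :: "'a set \<Rightarrow> ('a \<Rightarrow> 'a \<Rightarrow> bool) \<Rightarrow> real \<Rightarrow> nat \<Rightarrow> 'a set \<Rightarrow> real" where
  "reach_V V E r 0 S = (if S = V then 1 else 0)"
| "reach_V V E r (Suc k) S =
     (\<Sum>x\<in>V. \<Sum>y\<in>nbrs V E x.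
        (fit r S x / total_fitness V r S) * (1 / real (card (nbrs V E x))) *
        reach_V V E r k (if x \<in> S then insert y S else S - {y}))"

text \<open>Since V is absorbing, fixation (X_i = V for some i) is the increasing
 limit (supremum) of P(X_k = V).\<close>
definition fixation_prob :: "'a set \<Rightarrow> ('a \<Rightarrow> 'a \<Rightarrow> bool) \<Rightarrow> real \<Rightarrow> 'a set \<Rightarrow> real" where
  "fixation_prob V E r S = (SUP k. reach_V V E r k S)"

definition fix_prob_vertex :: "'a set \<Rightarrow> ('a \<Rightarrow> 'a \<Rightarrow> bool) \<Rightarrow> real \<Rightarrow> 'a \<Rightarrow> real" where
  "fix_prob_vertex V E r x = fixation_prob V E r {x}"

definition fix_prob :: "'a set \<Rightarrow> ('a \<Rightarrow> 'a \<Rightarrow> bool) \<Rightarrow> real \<Rightarrow> real" where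
  "fix_prob V E r = (1 / real (card V)) * (\<Sum>x\<in>V. fix_prob_vertex V E r x)"

end

theory Submission imports Defs begin

definition stepT :: "'a set \<Rightarrow> ('a \<Rightarrow> 'a \<Rightarrow> bool) \<Rightarrow> real \<Rightarrow> ('a set \<Rightarrow> real) \<Rightarrow> 'a set \<Rightarrow> real" where
  "stepT V E r g S = (\<Sum>x\<in>V. \<Sum>y\<in>nbrs V E x.
        (fit r S x / total_fitness V r S) * (1 / real (card (nbrs V E x))) *
        g (if x \<in> S then insert y S else S - {y}))"

definition phi :: "'a set \<Rightarrow> ('a \<Rightarrow> 'a \<Rightarrow> bool) \<Rightarrow> 'a set \<Rightarrow> real" where
  "phi V E S = (\<Sum>v\<in>S. 1 / real (card (nbrs V E v)))"

definition tr :: "'a set \<Rightarrow> 'a set \<Rightarrow> real" where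
  "tr V S = (if S \<noteq> {} \<and> S \<noteq> V then 1 else 0)"

definition indV :: "'a set \<Rightarrow> 'a set \<Rightarrow> real" where
  "indV V S = (if S = V then 1 else 0)"

lemma reach_pow: "reach_V V E r k = (stepT V E r ^^ k) (indV V)"
  by (induction k) (auto simp: indV_def stepT_def fun_eq_iff)

lemma stepT_lin: "stepT V E r (\<lambda>U. a * f U + b * g U) S = a * stepT V E r f S + b * stepT V E r g S"
  by (simp add: stepT_def sum_distrib_left sum.distrib algebra_simps)

lemma pow_lin: "(stepT V E r ^^ k) (\<lambda>U. a * f U + b * g U) S
   = a * (stepT V E r ^^ k) f S + b * (stepT V E r ^^ k) g S"
proof (induction k arbitrary: S)
  case 0 then show ?case by simp
next
  case (Suc k)
  have IH': "(stepT V E r ^^ k) (\<lambda>U. a * f U + b * g U) = (\<lambda>U. a * (stepT V E r ^^ k) f U + b * (stepT V E r ^^ k) g U)"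
    by (rule ext) (rule Suc.IH)
  show ?case by (simp only: funpow.simps(2) o_apply IH' stepT_lin)
qed

lemma swap_nbrs:
  assumes "finite V" "\<And>x y. E x y \<Longrightarrow> E y x"
  shows "(\<Sum>x\<in>V. \<Sum>y\<in>nbrs V E x. F x y) = (\<Sum>x\<in>V. \<Sum>y\<in>nbrs V E x. F y x)"
proof -
  have eq: "\<And>G. (\<Sum>x\<in>V. \<Sum>y\<in>nbrs V E x. G x y) = (\<Sum>x\<in>V. \<Sum>y\<in>V. if E x y then G x y else 0)"
    unfolding nbrs_def using assms(1) by (simp add: sum.inter_filter)
  have "(\<Sum>x\<in>V. \<Sum>y\<in>V. if E x y then F x y else 0) = (\<Sum>y\<in>V. \<Sum>x\<in>V. if E x y then F x y else 0)"
    by (rule sum.swap)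
  also have "\<dots> = (\<Sum>y\<in>V. \<Sum>x\<in>V. if E y x then F x y else 0)"
  proof -
    have Esym: "E x y = E y x" for x y using assms(2) by blast
    show ?thesis by (rule sum.cong[OF refl], rule sum.cong[OF refl]) (simp only: Esym)
  qed
  finally have c: "(\<Sum>x\<in>V. \<Sum>y\<in>V. if E x y then F x y else 0) = (\<Sum>y\<in>V. \<Sum>x\<in>V. if E y x then F x y else 0)" .
  show ?thesis using c by (simp only: eq)
qed

lemma cross_edge:
  assumes "(a, b) \<in> {(u, v). E u v}\<^sup>*" "a \<in> S" "b \<notin> S"
  shows "\<exists>x y. x \<in> S \<and> y \<notin> S \<and> E x y"
  using assms
proof (induction rule: rtrancl_induct)
  case base then show ?case by simp
next
  case (step c d)
  then show ?case by (cases "c \<in> S") auto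
qed

context
  fixes V :: "'a set" and E :: "'a \<Rightarrow> 'a \<Rightarrow> bool" and r :: real
  assumes conn: "connected_graph V E" and n2: "card V \<ge> 2" and r1: "r \<ge> 1"
begin

lemma finV: "finite V" using conn by (simp add: connected_graph_def graph_def)
lemma symE: "E x y \<Longrightarrow> E y x" using conn by (simp add: connected_graph_def graph_def)
lemma EV: "E x y \<Longrightarrow> x \<in> V \<and> y \<in> V" using conn by (simp add: connected_graph_def graph_def)
lemma nbrs_sub: "nbrs V E x \<subseteq> V" by (auto simp: nbrs_def)
lemma fin_nbrs: "finite (nbrs V E x)" using finV nbrs_sub finite_subset by blast

lemma deg_pos: assumes "x \<in> V" shows "card (nbrs V E x) > 0"
proof -
  have "\<exists>y\<in>V. y \<noteq> x"
  proof (rule ccontr)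
    assume "\<not> ?thesis" then have "V \<subseteq> {x}" by auto
    then have "card V \<le> 1" using card_mono[of "{x}" V] by simp
    then show False using n2 by simp
  qed
  then obtain y where y: "y \<in> V" "y \<noteq> x" by blast
  have "(x, y) \<in> {(u, v). E u v}\<^sup>*" using conn assms y by (simp add: connected_graph_def)
  from cross_edge[OF this, of "{x}"] y obtain z where "E x z" by auto
  then have "z \<in> nbrs V E x" using EV by (auto simp: nbrs_def)
  then show ?thesis using fin_nbrs card_gt_0_iff by blast
qed

lemma deg_le: "real (card (nbrs V E x)) \<le> real (card V)"
  using card_mono[OF finV nbrs_sub] by simp

lemma W_ge: assumes "S \<subseteq> V" shows "total_fitness V r S \<ge> real (card V)"
proof -
  have "card V = card S + card (V - S)"
    using assms finV finite_subset[OF assms finV] by (simp add: card_Diff_subset card_mono)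
  then have e: "real (card V) = real (card S) + real (card (V-S))" by simp
  have "real (card S) * 1 \<le> real (card S) * r" using r1 by (intro mult_left_mono) auto
  then show ?thesis unfolding total_fitness_def using e by (simp add: mult.commute)
qed

lemma card_pos: "real (card V) > 0" using n2 by simp

lemma W_pos: assumes "S \<subseteq> V" shows "total_fitness V r S > 0"
  using W_ge[OF assms] card_pos by linarith

lemma W_le: assumes "S \<subseteq> V" shows "total_fitness V r S \<le> r * real (card V)"
proof -
  have "card V = card S + card (V - S)"
    using assms finV finite_subset[OF assms finV] by (simp add: card_Diff_subset card_mono)
  then have e: "real (card V) = real (card S) + real (card (V-S))" by simp
  have "real (card (V-S)) * 1 \<le> real (card (V-S)) * r" using r1 by (intro mult_left_mono) auto
  then show ?thesis unfolding total_fitness_def using e by (simp add: distrib_left mult.commute)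
qed

lemma sum_fit: assumes "S \<subseteq> V" shows "(\<Sum>x\<in>V. fit r S x) = total_fitness V r S"
proof -
  have "(\<Sum>x\<in>V. fit r S x) = (\<Sum>x\<in>V \<inter> {x. x \<in> S}. r) + (\<Sum>x\<in>V \<inter> - {x. x\<in>S}. 1)"
    unfolding fit_def using finV by (rule sum.If_cases)
  also have "V \<inter> {x. x \<in> S} = S" using assms by auto
  also have "V \<inter> - {x. x\<in>S} = V - S" by auto
  finally show ?thesis by (simp add: total_fitness_def)
qed

lemma step_sub: "S \<subseteq> V \<Longrightarrow> x \<in> V \<Longrightarrow> y \<in> nbrs V E x \<Longrightarrow> (if x \<in> S then insert y S else S - {y}) \<subseteq> V"
  using nbrs_sub by auto

lemma coef_nonneg: "S \<subseteq> V \<Longrightarrow> 0 \<le> fit r S x / total_fitness V r S * (1 / real (card (nbrs V E x)))"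
  using W_pos[of S] r1 by (auto simp: fit_def)

lemma T_mono:
  assumes "S \<subseteq> V" "\<And>U. U \<subseteq> V \<Longrightarrow> f U \<le> g U"
  shows "stepT V E r f S \<le> stepT V E r g S"
  unfolding stepT_def
proof (intro sum_mono)
  fix x y assume x: "x \<in> V" and y: "y \<in> nbrs V E x"
  show "fit r S x / total_fitness V r S * (1 / real (card (nbrs V E x))) * f (if x \<in> S then insert y S else S - {y})
     \<le> fit r S x / total_fitness V r S * (1 / real (card (nbrs V E x))) * g (if x \<in> S then insert y S else S - {y})"
    by (rule mult_left_mono[OF assms(2)[OF step_sub[OF assms(1) x y]] coef_nonneg[OF assms(1)]])
qed

lemma T_cong:
  assumes "S \<subseteq> V" "\<And>U. U \<subseteq> V \<Longrightarrow> f U = g U"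
  shows "stepT V E r f S = stepT V E r g S"
proof -
  have "stepT V E r f S \<le> stepT V E r g S" by (rule T_mono[OF assms(1)]) (simp add: assms(2))
  moreover have "stepT V E r g S \<le> stepT V E r f S" by (rule T_mono[OF assms(1)]) (simp add: assms(2))
  ultimately show ?thesis by linarith
qed

lemma T_const:
  assumes "S \<subseteq> V"
  shows "stepT V E r (\<lambda>U. a) S = a"
proof -
  have "stepT V E r (\<lambda>U. a) S = (\<Sum>x\<in>V. fit r S x / total_fitness V r S * a)"
    unfolding stepT_def
  proof (intro sum.cong refl)
    fix x assume x: "x \<in> V"
    have d: "real (card (nbrs V E x)) > 0" using deg_pos[OF x] by simp
    show "(\<Sum>y\<in>nbrs V E x. fit r S x / total_fitness V r S * (1 / real (card (nbrs V E x))) * a)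
       = fit r S x / total_fitness V r S * a"
      using d by simp
  qed
  also have "\<dots> = (\<Sum>x\<in>V. fit r S x) / total_fitness V r S * a"
    by (simp add: sum_divide_distrib sum_distrib_right)
  also have "\<dots> = a" using sum_fit[OF assms] W_pos[OF assms] by simp
  finally show ?thesis .
qed

lemma pow_mono:
  assumes "\<And>U. U \<subseteq> V \<Longrightarrow> f U \<le> g U"
  shows "S \<subseteq> V \<Longrightarrow> (stepT V E r ^^ k) f S \<le> (stepT V E r ^^ k) g S"
proof (induction k arbitrary: S)
  case 0 then show ?case using assms by simp
next
  case (Suc k)
  then show ?case by (simp add: T_mono)
qed

lemma pow_const: "S \<subseteq> V \<Longrightarrow> (stepT V E r ^^ k) (\<lambda>U. a) S = a"
proof (induction k arbitrary: S)
  case 0 then show ?case by simp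
next
  case (Suc k)
  have "stepT V E r ((stepT V E r ^^ k) (\<lambda>U. a)) S = stepT V E r (\<lambda>U. a) S"
    by (rule T_cong[OF Suc.prems]) (rule Suc.IH)
  then show ?case using T_const[OF Suc.prems] by simp
qed

abbreviation "dg x \<equiv> real (card (nbrs V E x))"

lemma dg_pos: "x \<in> V \<Longrightarrow> dg x > 0" using deg_pos by simp

lemma phi_nonneg: "phi V E U \<ge> 0" unfolding phi_def by (intro sum_nonneg) auto

lemma phi_le: "U \<subseteq> V \<Longrightarrow> phi V E U \<le> phi V E V"
  unfolding phi_def by (intro sum_mono2 finV) auto

lemma phi_pos: "phi V E V > 0"
proof -
  have "V \<noteq> {}" using n2 by auto
  then show ?thesis unfolding phi_def using finV dg_pos by (intro sum_pos) auto
qed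

lemma phi_diff:
  assumes S: "S \<subseteq> V" and x: "x \<in> V" and y: "y \<in> nbrs V E x"
  shows "phi V E (if x \<in> S then insert y S else S - {y}) - phi V E S
    = (if x \<in> S then (if y \<in> S then 0 else 1 / dg y) else (if y \<in> S then - (1 / dg y) else 0))"
proof -
  have fS: "finite S" using S finV finite_subset by blast
  show ?thesis
  proof (cases "x \<in> S")
    case True
    then show ?thesis using fS by (cases "y \<in> S") (auto simp: phi_def insert_absorb)
  next
    case False
    then show ?thesis using fS by (cases "y \<in> S") (auto simp: phi_def sum_diff1)
  qed
qed

lemma T_minus: "S \<subseteq> V \<Longrightarrow> stepT V E r (\<lambda>U. g U - c) S = stepT V E r g S - c"
proof -
  assume S: "S \<subseteq> V"
  have "(\<lambda>U. g U - c) = (\<lambda>U. 1 * g U + (-1) * (\<lambda>U. c) U)" by simp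
  then have "stepT V E r (\<lambda>U. g U - c) S = 1 * stepT V E r g S + (-1) * stepT V E r (\<lambda>U. c) S"
    by (simp only: stepT_lin)
  then show ?thesis using T_const[OF S] by simp
qed

lemma phi_sub:
  assumes S: "S \<subseteq> V"
  shows "stepT V E r (phi V E) S \<ge> phi V E S"
proof -
  define W where "W = total_fitness V r S"
  have Wp: "W > 0" using W_pos[OF S] by (simp add: W_def)
  define A where "A x y = (if x \<in> S \<and> y \<notin> S then 1 / (dg x * dg y) else 0)" for x y
  define B where "B x y = (if x \<notin> S \<and> y \<in> S then 1 / (dg x * dg y) else 0)" for x y
  have "stepT V E r (phi V E) S - phi V E S = stepT V E r (\<lambda>U. phi V E U - phi V E S) S"
    using T_minus[OF S] by simp
  also have "\<dots> \<ge> (\<Sum>x\<in>V. \<Sum>y\<in>nbrs V E x. (A x y - B x y) / W)"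
    unfolding stepT_def
  proof (intro sum_mono)
    fix x y assume x: "x \<in> V" and y: "y \<in> nbrs V E x"
    have yV: "y \<in> V" using y nbrs_sub by auto
    have dx: "dg x > 0" using dg_pos[OF x] .
    have dy: "dg y > 0" using dg_pos[OF yV] .
    have q: "0 \<le> 1 / (dg x * dg y) / W" using dx dy Wp by simp
    show "(A x y - B x y) / W \<le> fit r S x / total_fitness V r S * (1 / dg x) *
        (phi V E (if x \<in> S then insert y S else S - {y}) - phi V E S)"
    proof (cases "x \<in> S")
      case True
      show ?thesis
      proof (cases "y \<in> S")
        case True then show ?thesis using \<open>x \<in> S\<close> phi_diff[OF S x y] by (simp add: A_def B_def)
      next
        case False
        have e: "fit r S x / total_fitness V r S * (1 / dg x) * (1 / dg y) = r * (1 / (dg x * dg y) / W)"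
          using True by (simp add: fit_def W_def)
        have "1 * (1 / (dg x * dg y) / W) \<le> r * (1 / (dg x * dg y) / W)"
          using r1 q by (intro mult_right_mono) auto
        then show ?thesis using True False phi_diff[OF S x y] e by (simp add: A_def B_def)
      qed
    next
      case False
      show ?thesis
      proof (cases "y \<in> S")
        case True
        have e: "fit r S x / total_fitness V r S * (1 / dg x) * (- (1 / dg y)) = - (1 / (dg x * dg y) / W)"
          using False by (simp add: fit_def W_def)
        then show ?thesis using True False phi_diff[OF S x y] by (simp add: A_def B_def)
      next
        case False then show ?thesis using \<open>x \<notin> S\<close> phi_diff[OF S x y] by (simp add: A_def B_def)
      qed
    qed
  qed
  also have "(\<Sum>x\<in>V. \<Sum>y\<in>nbrs V E x. (A x y - B x y) / W)
      = ((\<Sum>x\<in>V. \<Sum>y\<in>nbrs V E x. A x y) - (\<Sum>x\<in>V. \<Sum>y\<in>nbrs V E x. B x y)) / W"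
    by (simp only: sum_divide_distrib[symmetric] sum_subtractf)
  also have "(\<Sum>x\<in>V. \<Sum>y\<in>nbrs V E x. B x y) = (\<Sum>x\<in>V. \<Sum>y\<in>nbrs V E x. A y x)"
    by (intro sum.cong refl) (auto simp: A_def B_def mult.commute)
  also have "\<dots> = (\<Sum>x\<in>V. \<Sum>y\<in>nbrs V E x. A x y)"
    using swap_nbrs[OF finV, of E A] symE by metis
  finally show ?thesis by simp
qed

lemma transient_edge:
  assumes S: "S \<subseteq> V" and ne: "S \<noteq> {}" and nV: "S \<noteq> V"
  shows "\<exists>x y. x \<in> S \<and> y \<in> V \<and> y \<notin> S \<and> E x y"
proof -
  obtain a where a: "a \<in> S" using ne by blast
  obtain b where b: "b \<in> V" "b \<notin> S" using S nV by blast
  have "(a, b) \<in> {(u, v). E u v}\<^sup>*" using conn a b S by (auto simp: connected_graph_def)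
  from cross_edge[OF this a b(2)] obtain x y where "x \<in> S" "y \<notin> S" "E x y" by blast
  then show ?thesis using EV by blast
qed

lemma term_lb:
  assumes S: "S \<subseteq> V" and x: "x \<in> V" and y: "y \<in> V"
  shows "1 / real (card V) ^ 4 \<le> r / total_fitness V r S * (1 / dg x) * (1 / dg y) ^ 2"
proof -
  define n where "n = real (card V)"
  have np: "n > 0" using card_pos by (simp add: n_def)
  have Wp: "total_fitness V r S > 0" using W_pos[OF S] .
  have h1: "1 / n \<le> r / total_fitness V r S"
    using W_le[OF S] np Wp r1 by (simp add: n_def divide_simps mult.commute)
  have h2: "1 / n \<le> 1 / dg x" using dg_pos[OF x] deg_le[of x] np
    by (simp add: n_def divide_simps)
  have h3: "1 / n \<le> 1 / dg y" using dg_pos[OF y] deg_le[of y] np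
    by (simp add: n_def divide_simps)
  have h3': "(1 / n) ^ 2 \<le> (1 / dg y) ^ 2" using h3 np by (intro power_mono) auto
  have "(1/n) * (1/n) \<le> r / total_fitness V r S * (1 / dg x)"
    using h1 h2 np Wp r1 by (intro mult_mono) auto
  then have "(1/n) * (1/n) * (1/n)^2 \<le> r / total_fitness V r S * (1 / dg x) * (1 / dg y) ^ 2"
    using dg_pos[OF x] Wp r1 np by (intro mult_mono[OF _ h3']) auto
  moreover have "(1/n) * (1/n) * (1/n)^2 = 1 / n ^ 4" by (simp add: power2_eq_square power4_eq_xxxx)
  ultimately show ?thesis by (simp add: n_def)
qed

lemma psi_sub:
  assumes S: "S \<subseteq> V"
  shows "stepT V E r (\<lambda>U. (phi V E U)^2) S \<ge> (phi V E S)^2 + 1 / real (card V) ^ 4 * tr V S"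
proof -
  define p where "p = phi V E S"
  define Q where "Q = stepT V E r (\<lambda>U. (phi V E U - p)^2) S"
  have "(\<lambda>U. (phi V E U)^2) = (\<lambda>U. (1 * (phi V E U - p)^2 + (2*p) * phi V E U) - p^2)"
    by (rule ext) (simp add: power2_eq_square algebra_simps)
  then have "stepT V E r (\<lambda>U. (phi V E U)^2) S = stepT V E r (\<lambda>U. 1 * (phi V E U - p)^2 + (2*p) * phi V E U) S - p^2"
    using T_minus[OF S] by simp
  also have "\<dots> = Q + 2 * p * stepT V E r (phi V E) S - p^2"
    using stepT_lin[of V E r 1 "\<lambda>U. (phi V E U - p)^2" "2*p" "phi V E" S] by (simp add: Q_def)
  finally have e: "stepT V E r (\<lambda>U. (phi V E U)^2) S = Q + 2 * p * stepT V E r (phi V E) S - p^2" .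
  have "p * p \<le> p * stepT V E r (phi V E) S"
    using phi_sub[OF S] phi_nonneg[of S] by (intro mult_left_mono) (auto simp: p_def)
  then have e2: "stepT V E r (\<lambda>U. (phi V E U)^2) S \<ge> Q + p^2"
    using e by (simp add: power2_eq_square)
  have Q: "Q \<ge> 1 / real (card V) ^ 4 * tr V S"
  proof (cases "S \<noteq> {} \<and> S \<noteq> V")
    case False
    have "stepT V E r (\<lambda>U. 0) S \<le> Q" unfolding Q_def by (rule T_mono[OF S]) simp
    then show ?thesis using False T_const[OF S, of 0] by (auto simp: tr_def)
  next
    case True
    then obtain x0 y0 where xy: "x0 \<in> S" "y0 \<in> V" "y0 \<notin> S" "E x0 y0"
      using transient_edge[OF S] by blast
    have x0: "x0 \<in> V" using xy S by auto
    have y0: "y0 \<in> nbrs V E x0" using xy by (simp add: nbrs_def)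
    define t where "t x y = fit r S x / total_fitness V r S * (1 / dg x) *
        (phi V E (if x \<in> S then insert y S else S - {y}) - p)^2" for x y
    have tnn: "t x y \<ge> 0" if "x \<in> V" for x y
      unfolding t_def using W_pos[OF S] r1 by (intro mult_nonneg_nonneg) (auto simp: fit_def)
    have "t x0 y0 \<le> (\<Sum>y\<in>nbrs V E x0. t x0 y)"
      using y0 fin_nbrs tnn[OF x0] by (intro member_le_sum) auto
    also have "\<dots> \<le> (\<Sum>x\<in>V. \<Sum>y\<in>nbrs V E x. t x y)"
      using x0 finV tnn by (intro member_le_sum sum_nonneg) auto
    also have "\<dots> = Q" unfolding Q_def stepT_def t_def by simp
    finally have tq: "t x0 y0 \<le> Q" .
    have "t x0 y0 = r / total_fitness V r S * (1 / dg x0) * (1 / dg y0) ^ 2"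
      using phi_diff[OF S x0 y0] xy by (simp add: t_def p_def fit_def)
    then have "1 / real (card V) ^ 4 \<le> t x0 y0" using term_lb[OF S x0 xy(2)] by simp
    then show ?thesis using tq True by (simp add: tr_def)
  qed
  show ?thesis using e2 Q by (simp add: p_def)
qed

lemma pow_Suc_right: "(stepT V E r ^^ Suc k) f S = (stepT V E r ^^ k) (stepT V E r f) S"
  by (simp only: funpow_Suc_right o_apply)

lemma tr_step:
  assumes S: "S \<subseteq> V"
  shows "stepT V E r (tr V) S \<le> tr V S"
proof (cases "S = {} \<or> S = V")
  case True
  have "stepT V E r (tr V) S = 0"
    unfolding stepT_def
  proof (intro sum.neutral ballI)
    fix x y assume x: "x \<in> V" and y: "y \<in> nbrs V E x"
    have "y \<in> V" using y nbrs_sub by auto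
    then have "tr V (if x \<in> S then insert y S else S - {y}) = 0"
      using True x by (auto simp: tr_def insert_absorb)
    then show "fit r S x / total_fitness V r S * (1 / real (card (nbrs V E x))) *
        tr V (if x \<in> S then insert y S else S - {y}) = 0" by simp
  qed
  then show ?thesis using True by (auto simp: tr_def)
next
  case False
  have "stepT V E r (tr V) S \<le> stepT V E r (\<lambda>U. 1) S" by (rule T_mono[OF S]) (simp add: tr_def)
  then show ?thesis using False T_const[OF S] by (simp add: tr_def)
qed

lemma pow_tr_dec: "S \<subseteq> V \<Longrightarrow> (stepT V E r ^^ Suc k) (tr V) S \<le> (stepT V E r ^^ k) (tr V) S"
  unfolding pow_Suc_right by (rule pow_mono) (rule tr_step)

lemma pow_tr_anti: assumes S: "S \<subseteq> V" and jk: "j \<le> k"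
  shows "(stepT V E r ^^ k) (tr V) S \<le> (stepT V E r ^^ j) (tr V) S"
  by (rule lift_Suc_antimono_le[of "\<lambda>k. (stepT V E r ^^ k) (tr V) S"], rule pow_tr_dec[OF S], rule jk)

abbreviation "eps \<equiv> 1 / real (card V) ^ 4"

lemma psi_iter:
  assumes S: "S \<subseteq> V"
  shows "(stepT V E r ^^ k) (\<lambda>U. (phi V E U)^2) S \<ge> (phi V E S)^2 + eps * (\<Sum>j<k. (stepT V E r ^^ j) (tr V) S)"
proof (induction k)
  case 0 then show ?case by simp
next
  case (Suc k)
  have "(stepT V E r ^^ Suc k) (\<lambda>U. (phi V E U)^2) S = (stepT V E r ^^ k) (stepT V E r (\<lambda>U. (phi V E U)^2)) S"
    by (rule pow_Suc_right)
  also have "\<dots> \<ge> (stepT V E r ^^ k) (\<lambda>U. 1 * (phi V E U)^2 + eps * tr V U) S"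
    by (rule pow_mono[OF _ S]) (use psi_sub in simp)
  finally have "(stepT V E r ^^ Suc k) (\<lambda>U. (phi V E U)^2) S \<ge>
     (stepT V E r ^^ k) (\<lambda>U. (phi V E U)^2) S + eps * (stepT V E r ^^ k) (tr V) S"
    by (simp only: pow_lin)
  then show ?case using Suc by (simp add: distrib_left del: funpow.simps)
qed

lemma psi_bound:
  assumes S: "S \<subseteq> V"
  shows "(stepT V E r ^^ k) (\<lambda>U. (phi V E U)^2) S \<le> (phi V E V)^2"
proof -
  have "(stepT V E r ^^ k) (\<lambda>U. (phi V E U)^2) S \<le> (stepT V E r ^^ k) (\<lambda>U. (phi V E V)^2) S"
    by (rule pow_mono[OF _ S]) (intro power_mono phi_le phi_nonneg)
  then show ?thesis using pow_const[OF S] by simp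
qed

definition "Cst = (phi V E V)^2 / eps"

lemma tr_bound:
  assumes S: "S \<subseteq> V"
  shows "real k * (stepT V E r ^^ k) (tr V) S \<le> Cst"
proof -
  have epos: "eps > 0" using card_pos by simp
  have "real k * (stepT V E r ^^ k) (tr V) S = (\<Sum>j<k. (stepT V E r ^^ k) (tr V) S)" by simp
  also have "\<dots> \<le> (\<Sum>j<k. (stepT V E r ^^ j) (tr V) S)"
    by (intro sum_mono pow_tr_anti[OF S]) auto
  finally have a: "real k * (stepT V E r ^^ k) (tr V) S \<le> (\<Sum>j<k. (stepT V E r ^^ j) (tr V) S)" .
  have "eps * (\<Sum>j<k. (stepT V E r ^^ j) (tr V) S) \<le> (phi V E V)^2"
    using psi_iter[OF S, of k] psi_bound[OF S, of k] by (smt (verit) zero_le_power2)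
  then have "(\<Sum>j<k. (stepT V E r ^^ j) (tr V) S) \<le> Cst"
    using epos unfolding Cst_def by (simp add: field_simps)
  then show ?thesis using a by linarith
qed

lemma phi_iter: "S \<subseteq> V \<Longrightarrow> phi V E S \<le> (stepT V E r ^^ k) (phi V E) S"
proof (induction k)
  case 0 then show ?case by simp
next
  case (Suc k)
  have "(stepT V E r ^^ k) (phi V E) S \<le> (stepT V E r ^^ k) (stepT V E r (phi V E)) S"
    by (rule pow_mono[OF _ Suc.prems]) (rule phi_sub)
  then show ?case using Suc by (simp only: pow_Suc_right) simp
qed

lemma reach_le1: "S \<subseteq> V \<Longrightarrow> reach_V V E r k S \<le> 1"
proof -
  assume S: "S \<subseteq> V"
  have "(stepT V E r ^^ k) (indV V) S \<le> (stepT V E r ^^ k) (\<lambda>U. 1) S"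
    by (rule pow_mono[OF _ S]) (simp add: indV_def)
  then show ?thesis using pow_const[OF S] by (simp add: reach_pow)
qed

lemma reach_lb:
  assumes S: "S \<subseteq> V" and k: "k > 0"
  shows "phi V E S / phi V E V - Cst / real k \<le> reach_V V E r k S"
proof -
  have "(stepT V E r ^^ k) (phi V E) S \<le> (stepT V E r ^^ k) (\<lambda>U. phi V E V * indV V U + phi V E V * tr V U) S"
  proof (rule pow_mono[OF _ S])
    fix U assume U: "U \<subseteq> V"
    show "phi V E U \<le> phi V E V * indV V U + phi V E V * tr V U"
      using phi_le[OF U] phi_nonneg[of V] by (auto simp: indV_def tr_def phi_def)
  qed
  then have "phi V E S \<le> phi V E V * reach_V V E r k S + phi V E V * (stepT V E r ^^ k) (tr V) S"
    using phi_iter[OF S, of k] by (simp add: pow_lin reach_pow)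
  moreover have "(stepT V E r ^^ k) (tr V) S \<le> Cst / real k"
    using tr_bound[OF S, of k] k by (simp add: field_simps)
  ultimately have "phi V E S \<le> phi V E V * reach_V V E r k S + phi V E V * (Cst / real k)"
    using phi_pos by (smt (verit) mult_left_mono)
  then show ?thesis using phi_pos by (simp add: field_simps)
qed

lemma fix_lb:
  assumes S: "S \<subseteq> V"
  shows "phi V E S / phi V E V \<le> fixation_prob V E r S"
proof (rule ccontr)
  assume "\<not> ?thesis"
  then have d: "fixation_prob V E r S < phi V E S / phi V E V" by simp
  define \<delta> where "\<delta> = phi V E S / phi V E V - fixation_prob V E r S"
  have dp: "\<delta> > 0" using d by (simp add: \<delta>_def)
  obtain n where n: "Cst / \<delta> < real n" using reals_Archimedean2 by blast
  define k where "k = Suc n"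
  have Cnn: "Cst \<ge> 0" unfolding Cst_def using card_pos by simp
  have kp: "real k > 0" by (simp add: k_def)
  have "Cst / \<delta> < real k" using n by (simp add: k_def)
  then have Ck: "Cst / real k < \<delta>" using dp kp by (simp add: field_simps)
  have bdd: "bdd_above (range (\<lambda>k. reach_V V E r k S))"
    using reach_le1[OF S] by (intro bdd_aboveI2) auto
  have "reach_V V E r k S \<le> fixation_prob V E r S"
    unfolding fixation_prob_def by (rule cSUP_upper[OF _ bdd]) simp
  moreover have "phi V E S / phi V E V - Cst / real k \<le> reach_V V E r k S"
    by (rule reach_lb[OF S]) (simp add: k_def)
  ultimately show False using Ck by (simp add: \<delta>_def)
qed

end

theorem lemma1:
  fixes V :: "'a set" and E :: "'a \<Rightarrow> 'a \<Rightarrow> bool" and r :: real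
  assumes "connected_graph V E"
    and "card V \<ge> 2"
    and "r \<ge> 1"
  shows "fix_prob V E r \<ge> 1 / real (card V)"
proof -
  have pp: "phi V E V > 0" using phi_pos[OF assms] .
  have fin: "finite V" using finV[OF assms] .
  have "(\<Sum>x\<in>V. phi V E {x} / phi V E V) \<le> (\<Sum>x\<in>V. fix_prob_vertex V E r x)"
    unfolding fix_prob_vertex_def by (intro sum_mono fix_lb[OF assms]) auto
  moreover have "(\<Sum>x\<in>V. phi V E {x} / phi V E V) = 1"
  proof -
    have "(\<Sum>x\<in>V. phi V E {x} / phi V E V) = (\<Sum>x\<in>V. phi V E {x}) / phi V E V"
      by (rule sum_divide_distrib[symmetric])
    also have "(\<Sum>x\<in>V. phi V E {x}) = phi V E V" by (simp add: phi_def)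
    finally show ?thesis using pp by simp
  qed
  ultimately have "1 \<le> (\<Sum>x\<in>V. fix_prob_vertex V E r x)" by simp
  then show ?thesis unfolding fix_prob_def using card_pos[OF assms]
    by (simp add: divide_right_mono)
qed

end
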